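(* Let $(G,\prec)$ be an ordered graph with vertices $a\prec b\prec c\prec d$ such that there is a crossing sequence from $a$ to $c$ and a crossing sequence from $b$ to $d$. Then there is a crossing sequence from $a$ to $d$.
   Context: An ordered graph is a pair $(G,\prec)$ where $G$ is a finite graph and $\prec$ a linear order on $V(G)$. For vertices $p\prec q\prec r\prec s$ with $pr,qs\in E(G)$, we say $pr$ crosses $qs$. For distinct vertices $u\prec v$, a crossing sequence from $u$ to $v$ is a sequence of distinct edges $e_1,\dots,e_k$ such that $u$ is the smaller end of $e_1$, $v$ is the larger end of $e_k$, and $e_i$ crosses $e_{i+1}$ for $1\le i<k$. *)

theory Defs
  imports Main
begin

text \<open>An ordered graph: finite vertex set V, edge set E of 2-element subsets of V,
  the linear order on V is the order of the linorder type 'a restricted to V.\<close>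

definition ordered_graph :: "'a::linorder set \<Rightarrow> 'a set set \<Rightarrow> bool" where
  "ordered_graph V E \<longleftrightarrow> finite V \<and> (\<forall>e\<in>E. e \<subseteq> V \<and> card e = 2)"

definition crosses :: "'a::linorder set \<Rightarrow> 'a set \<Rightarrow> bool" where
  "crosses e f \<longleftrightarrow> (\<exists>p q r s. p < q \<and> q < r \<and> r < s \<and> e = {p, r} \<and> f = {q, s})"

definition crossing_seq :: "'a::linorder set set \<Rightarrow> 'a set list \<Rightarrow> 'a \<Rightarrow> 'a \<Rightarrow> bool" where
  "crossing_seq E es u v \<longleftrightarrow> u < v \<and> es \<noteq> [] \<and> distinct es \<and> set es \<subseteq> E
     \<and> u = Min (hd es) \<and> v = Max (last es)
     \<and> (\<forall>i. Suc i < length es \<longrightarrow> crosses (es ! i) (es ! Suc i))"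

end

theory Submission
  imports Defs
begin

fun ch :: "'a::linorder set list \<Rightarrow> bool" where
  "ch [] = True"
| "ch [e] = True"
| "ch (e # f # r) = (crosses e f \<and> ch (f # r))"

lemma ch_iff: "ch es \<longleftrightarrow> (\<forall>i. Suc i < length es \<longrightarrow> crosses (es ! i) (es ! Suc i))"
proof (induction es rule: ch.induct)
  case (3 e f r)
  have "(\<forall>i. Suc i < length (e # f # r) \<longrightarrow> crosses ((e # f # r) ! i) ((e # f # r) ! Suc i))
     \<longleftrightarrow> crosses e f \<and> (\<forall>i. Suc i < length (f # r) \<longrightarrow> crosses ((f # r) ! i) ((f # r) ! Suc i))"
    (is "?L \<longleftrightarrow> ?R")
  proof
    assume L: ?L
    show ?R
    proof
      show "crosses e f" using L[rule_format, of 0] by simp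
      show "\<forall>i. Suc i < length (f # r) \<longrightarrow> crosses ((f # r) ! i) ((f # r) ! Suc i)"
        using L by (metis length_Cons nth_Cons_Suc Suc_less_eq)
    qed
  next
    assume R: ?R
    show ?L
    proof (intro allI impI)
      fix i assume i: "Suc i < length (e # f # r)"
      show "crosses ((e # f # r) ! i) ((e # f # r) ! Suc i)"
      proof (cases i)
        case 0 then show ?thesis using R by simp
      next
        case (Suc j) then show ?thesis using R i by simp
      qed
    qed
  qed
  then show ?case using 3 by simp
qed auto

lemma crosses_D: "crosses e f \<Longrightarrow> Min e < Min f \<and> Min f < Max e \<and> Max e < Max f"
  unfolding crosses_def by auto

lemma crosses_I:
  assumes "card e = 2" "card f = 2" "Min e < Min f" "Min f < Max e" "Max e < Max f"
  shows "crosses e f"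
proof -
  obtain x y where e: "e = {x, y}" "x \<noteq> y" using assms(1) card_2_iff by metis
  obtain u v where f: "f = {u, v}" "u \<noteq> v" using assms(2) card_2_iff by metis
  have "e = {Min e, Max e}" using e by (cases "x < y") (auto simp: min_def max_def)
  moreover have "f = {Min f, Max f}" using f by (cases "u < v") (auto simp: min_def max_def)
  ultimately show ?thesis unfolding crosses_def using assms(3-5) by blast
qed

lemma ch_min: "ch (e # es) \<Longrightarrow> x \<in> set es \<Longrightarrow> Min e < Min x"
proof (induction es arbitrary: e)
  case (Cons f r)
  then show ?case using crosses_D by (auto, fastforce)
qed auto

lemma ch_distinct: "ch es \<Longrightarrow> distinct es"
proof (induction es rule: ch.induct)
  case (3 e f r)
  then show ?case using ch_min[of e "f # r"] by auto
qed auto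

lemma ch_max: "ch (e # es) \<Longrightarrow> Max e \<le> Max (last (e # es))"
proof (induction es arbitrary: e)
  case (Cons f r)
  then show ?case using crosses_D by (simp, fastforce)
qed auto

lemma lemB:
  assumes E2: "\<forall>x\<in>E. card x = 2"
  shows "es \<noteq> [] \<Longrightarrow> set es \<subseteq> E \<Longrightarrow> ch es \<Longrightarrow> g \<in> E \<Longrightarrow>
    Min (hd es) < Min g \<Longrightarrow> Min g < Max (last es) \<Longrightarrow> Max (last es) < Max g \<Longrightarrow>
    \<exists>es'. es' \<noteq> [] \<and> set es' \<subseteq> E \<and> ch es' \<and> hd es' = hd es \<and> last es' = g"
proof (induction es rule: ch.induct)
  case (2 e)
  then have "crosses e g" using E2 crosses_I by auto
  then show ?case using 2 by (intro exI[of _ "[e, g]"]) auto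
next
  case (3 e f r)
  show ?case
  proof (cases "Min f < Min g")
    case True
    then obtain es' where es': "es' \<noteq> []" "set es' \<subseteq> E" "ch es'" "hd es' = f" "last es' = g"
      using 3 by auto
    then obtain t where t: "es' = f # t" by (cases es') auto
    show ?thesis using 3 es' t by (intro exI[of _ "e # es'"]) auto
  next
    case False
    have c: "crosses e f" using 3 by simp
    have "ch (f # r)" using 3 by simp
    from ch_max[OF this] have "Max f \<le> Max (last (f # r))" .
    then have "Max e < Max g" using crosses_D[OF c] 3 by (auto split: if_splits)
    moreover have "Min g < Max e" using crosses_D[OF c] False by (auto simp: not_less)
    moreover have "card e = 2" "card g = 2" using 3 E2 by auto
    moreover have "Min e < Min g" using 3 by simp
    ultimately have "crosses e g" using crosses_I by blast
    then show ?thesis using 3 by (intro exI[of _ "[e, g]"]) auto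
  qed
qed auto

lemma main:
  assumes E2: "\<forall>x\<in>E. card x = 2"
  shows "gs \<noteq> [] \<Longrightarrow> set gs \<subseteq> E \<Longrightarrow> ch gs \<Longrightarrow>
    H \<noteq> [] \<Longrightarrow> set H \<subseteq> E \<Longrightarrow> ch H \<Longrightarrow> Min (hd H) < Min (hd gs) \<Longrightarrow> Min (hd gs) < Max (last H) \<Longrightarrow>
    \<exists>H'. H' \<noteq> [] \<and> set H' \<subseteq> E \<and> ch H' \<and> Min (hd H') = Min (hd H)
       \<and> Max (last H') = max (Max (last H)) (Max (last gs))"
proof (induction gs arbitrary: H rule: ch.induct)
  case (2 g)
  show ?case
  proof (cases "Max g \<le> Max (last H)")
    case True
    then show ?thesis using 2 by (intro exI[of _ H]) auto
  next
    case False
    then have "Max (last H) < Max g" by simp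
    then obtain H' where "H' \<noteq> [] \<and> set H' \<subseteq> E \<and> ch H' \<and> hd H' = hd H \<and> last H' = g"
      using lemB[OF E2, of H g] 2 by auto
    then show ?thesis using False by (intro exI[of _ H']) auto
  qed
next
  case (3 g f r)
  have c: "crosses g f" using 3 by simp
  obtain H1 where H1: "H1 \<noteq> []" "set H1 \<subseteq> E" "ch H1" "Min (hd H1) = Min (hd H)"
     "Max (last H1) = max (Max (last H)) (Max g)"
  proof (cases "Max g \<le> Max (last H)")
    case True
    then show ?thesis using 3 that[of H] by auto
  next
    case False
    then have "Max (last H) < Max g" by simp
    then obtain H' where "H' \<noteq> [] \<and> set H' \<subseteq> E \<and> ch H' \<and> hd H' = hd H \<and> last H' = g"
      using lemB[OF E2, of H g] 3 by auto
    then show ?thesis using False that[of H'] by auto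
  qed
  have "ch (f # r)" using 3 by simp
  from ch_max[OF this] have m: "Max f \<le> Max (last (f # r))" .
  have p1: "f # r \<noteq> []" "set (f # r) \<subseteq> E" "ch (f # r)" using 3 by auto
  have p2: "Min (hd H1) < Min (hd (f # r))" using H1 3 crosses_D[OF c] by auto
  have p3: "Min (hd (f # r)) < Max (last H1)" using H1 crosses_D[OF c] by (auto simp: less_max_iff_disj)
  obtain H2 where H2: "H2 \<noteq> [] \<and> set H2 \<subseteq> E \<and> ch H2 \<and> Min (hd H2) = Min (hd H1)
       \<and> Max (last H2) = max (Max (last H1)) (Max (last (f # r)))"
    using 3(1)[OF p1 H1(1,2,3) p2 p3] by blast
  have "max (Max (last H1)) (Max (last (f # r))) = max (Max (last H)) (Max (last (g # f # r)))"
    using H1(5) crosses_D[OF c] m by (auto simp: max_def)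
  then show ?case using H1 H2 by (intro exI[of _ H2]) auto
qed auto

theorem lemma3p1:
  fixes V :: "'a::linorder set" and E :: "'a set set" and a b c d :: 'a
  assumes "ordered_graph V E"
    and "a \<in> V" "b \<in> V" "c \<in> V" "d \<in> V"
    and "a < b" "b < c" "c < d"
    and "\<exists>es. crossing_seq E es a c"
    and "\<exists>es. crossing_seq E es b d"
  shows "\<exists>es. crossing_seq E es a d"
proof -
  have E2: "\<forall>x\<in>E. card x = 2" using assms(1) unfolding ordered_graph_def by auto
  obtain H where H: "crossing_seq E H a c" using assms by auto
  obtain G where G: "crossing_seq E G b d" using assms by auto
  obtain H' where "H' \<noteq> [] \<and> set H' \<subseteq> E \<and> ch H' \<and> Min (hd H') = Min (hd H)
       \<and> Max (last H') = max (Max (last H)) (Max (last G))"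
    using main[OF E2, of G H] H G assms(6-8) unfolding crossing_seq_def ch_iff[symmetric] by auto
  then show ?thesis using H G assms(6-8) ch_distinct unfolding crossing_seq_def ch_iff[symmetric]
    by (intro exI[of _ H']) auto
qed

end
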